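(* Suppose $f$ is $L_f$-smooth, $\mathbf{c}$ is $L_c$-smooth, and there exist $C,G>0$ such that for all $\mathbf{x}$: $\|\nabla f(\mathbf{x})\|\le G$, all subgradients of $h$ and $g$ have norm at most $G$, $\|\nabla\mathbf{c}(\mathbf{x})\|\le G$, $\|\mathbf{c}(\mathbf{x})\|\le C$. Then for any $k\ge0$, $\|\mathbf{u}^{k+1}\|^2\le3\|\mathbf{e}^k\|^2+3(L_{\rho_k}^2+(\mu_k\beta)^{-2})\|\mathbf{w}^{k+1}-\mathbf{w}^k\|^2$, and $\max\{\|\mathbf{u}^{k+1}\|^2,\|\mathbf{x}^{k+1}-\mathrm{prox}_{\mu_kg}(\mathbf{z}^k)\|^2\}\le3\|\mathbf{e}^k\|^2+\bigl(3(L_{\rho_k}^2+(\mu_k\beta)^{-2})+\beta^{-2}\bigr)\|\mathbf{w}^{k+1}-\mathbf{w}^k\|^2$.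
   Context: Problem: $\min f(\mathbf{x})+h(\mathbf{x})-g(\mathbf{x})$ s.t. $\mathbf{c}(\mathbf{x})=\mathbf{0}$, $f=\mathbb{E}_\xi[\mathbf{f}(\cdot,\xi)]$, $h,g$ proper closed convex. $Q_\rho(\mathbf{x})=f(\mathbf{x})+\frac{\rho}{2}\|\mathbf{c}(\mathbf{x})\|^2$, $L_\rho$-smooth with $L_\rho=\rho(\rho_0^{-1}L_f+G^2+CL_c)$. Iterates $\mathbf{w}^k=(\mathbf{x}^k,\mathbf{z}^k)$ of MoSSP-P or MoSSP-R: $\mathbf{x}^{k+1}=\mathrm{prox}_{\mu_kh}(\mathbf{z}^k-\mu_k\mathbf{G}^k)$, $\mathbf{z}^{k+1}=\mathbf{z}^k-\beta(\mathrm{prox}_{\mu_kg}(\mathbf{z}^k)-\mathbf{x}^{k+1})$, with $\mathbf{G}^k$ the Polyak-momentum estimator $\mathbf{S}^k$ or recursive-momentum estimator $\mathbf{D}^k$ of $\nabla Q_{\rho_k}(\mathbf{x}^k)$; $\mathbf{e}^k:=\mathbf{G}^k-\nabla Q_{\rho_k}(\mathbf{x}^k)$; $\mathbf{u}^{k+1}:=\nabla Q_{\rho_k}(\mathbf{x}^{k+1})-\mathbf{G}^k+\mu_k^{-1}(\mathrm{prox}_{\mu_kg}(\mathbf{z}^k)-\mathbf{x}^{k+1})$, which lies in $\partial(Q_{\rho_k}+h)(\mathbf{x}^{k+1})-\partial g(\mathrm{prox}_{\mu_kg}(\mathbf{z}^k))$. *)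

theory Defs
  imports "HOL-Analysis.Analysis" "HOL-Library.Extended_Real"
begin

definition proper_fun :: "('a::euclidean_space \<Rightarrow> ereal) \<Rightarrow> bool" where
  "proper_fun h \<longleftrightarrow> (\<forall>x. h x \<noteq> -\<infinity>) \<and> (\<exists>x. h x \<noteq> \<infinity>)"

definition closed_fun :: "('a::euclidean_space \<Rightarrow> ereal) \<Rightarrow> bool" where
  "closed_fun h \<longleftrightarrow> (\<forall>x X. X \<longlonglongrightarrow> x \<longrightarrow> h x \<le> liminf (\<lambda>n. h (X n)))"

definition convex_fun :: "('a::euclidean_space \<Rightarrow> ereal) \<Rightarrow> bool" where
  "convex_fun h \<longleftrightarrow> (\<forall>x y t. 0 \<le> t \<and> t \<le> 1 \<longrightarrow>
      h ((1 - t) *\<^sub>R x + t *\<^sub>R y) \<le> ereal (1 - t) * h x + ereal t * h y)"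

definition subdiff :: "('a::euclidean_space \<Rightarrow> ereal) \<Rightarrow> 'a \<Rightarrow> 'a set" where
  "subdiff h x = {s. h x \<noteq> \<infinity> \<and> (\<forall>y. h x + ereal (s \<bullet> (y - x)) \<le> h y)}"

definition prox :: "real \<Rightarrow> ('a::euclidean_space \<Rightarrow> ereal) \<Rightarrow> 'a \<Rightarrow> 'a" where
  "prox \<mu> h v = (THE p. \<forall>y. h p + ereal ((norm (p - v))\<^sup>2 / (2 * \<mu>))
                              \<le> h y + ereal ((norm (y - v))\<^sup>2 / (2 * \<mu>)))"

text \<open>Penalty function Q_rho(x) = f(x) + rho/2 ||c(x)||^2 and its smoothness constant.\<close>

definition Qpen :: "('a::euclidean_space \<Rightarrow> real) \<Rightarrow> ('a \<Rightarrow> 'b::euclidean_space) \<Rightarrow> real \<Rightarrow> 'a \<Rightarrow> real" where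
  "Qpen f c \<rho> x = f x + \<rho> / 2 * (norm (c x))\<^sup>2"

definition Lrho :: "real \<Rightarrow> real \<Rightarrow> real \<Rightarrow> real \<Rightarrow> real \<Rightarrow> real \<Rightarrow> real" where
  "Lrho \<rho>0 Lf G C Lc \<rho> = \<rho> * (Lf / \<rho>0 + G\<^sup>2 + C * Lc)"

end

theory Submission
  imports Defs
begin

lemma sq3: "((a::real) + b + c)^2 \<le> 3 * a^2 + 3 * (b^2 + c^2)"
proof -
  have "0 \<le> (a-b)^2+(b-c)^2+(a-c)^2" by simp
  then show ?thesis by (simp add: power2_eq_square algebra_simps)
qed

lemma gQ_inner:
  fixes f :: "'a::euclidean_space \<Rightarrow> real" and c :: "'a \<Rightarrow> 'b::euclidean_space"
  assumes f_grad: "GDERIV f y :> gf"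
    and c_deriv: "(c has_derivative blinfun_apply D) (at y)"
    and gQ_grad: "GDERIV (Qpen f c r) y :> q"
  shows "q \<bullet> v = gf \<bullet> v + r * (c y \<bullet> D v)"
proof -
  have e: "Qpen f c r = (\<lambda>x. f x + r / 2 * (c x \<bullet> c x))"
    by (auto simp: Qpen_def fun_eq_iff power2_norm_eq_inner)
  have d1: "(f has_derivative (\<lambda>h. h \<bullet> gf)) (at y)" using f_grad by (simp add: gderiv_def)
  have d2: "((\<lambda>x. c x \<bullet> c x) has_derivative (\<lambda>h. c y \<bullet> D h + D h \<bullet> c y)) (at y)"
    by (rule has_derivative_inner[OF c_deriv c_deriv])
  have "(Qpen f c r has_derivative (\<lambda>h. h \<bullet> gf + r / 2 * (c y \<bullet> D h + D h \<bullet> c y))) (at y)"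
    unfolding e by (intro derivative_intros d1 d2)
  moreover have "(Qpen f c r has_derivative (\<lambda>h. h \<bullet> q)) (at y)" using gQ_grad by (simp add: gderiv_def)
  ultimately have "(\<lambda>h. h \<bullet> gf + r / 2 * (c y \<bullet> D h + D h \<bullet> c y)) = (\<lambda>h. h \<bullet> q)"
    by (rule has_derivative_unique)
  from fun_cong[OF this, of v] show ?thesis by (simp add: inner_commute)
qed

lemma c_lip:
  fixes c :: "'a::euclidean_space \<Rightarrow> 'b::euclidean_space"
  assumes c_deriv: "\<And>y. (c has_derivative blinfun_apply (Dc y)) (at y)"
    and Dc_bound: "\<And>y. norm (Dc y) \<le> G"
  shows "norm (c y - c y') \<le> G * norm (y - y')"
proof (rule differentiable_bound[where S=UNIV and f'="\<lambda>y. blinfun_apply (Dc y)"])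
  show "\<And>x. x \<in> UNIV \<Longrightarrow> (c has_derivative blinfun_apply (Dc x)) (at x within UNIV)"
    using c_deriv by simp
  show "\<And>x. x \<in> UNIV \<Longrightarrow> onorm (blinfun_apply (Dc x)) \<le> G"
    using Dc_bound by (simp add: norm_blinfun.rep_eq[symmetric])
qed auto

lemma gQ_lip:
  fixes f :: "'a::euclidean_space \<Rightarrow> real" and c :: "'a \<Rightarrow> 'b::euclidean_space"
  assumes f_grad: "\<And>y. GDERIV f y :> gf y"
    and f_smooth: "\<And>y y'. norm (gf y - gf y') \<le> Lf * norm (y - y')"
    and c_deriv: "\<And>y. (c has_derivative blinfun_apply (Dc y)) (at y)"
    and c_smooth: "\<And>y y'. norm (Dc y - Dc y') \<le> Lc * norm (y - y')"
    and Dc_bound: "\<And>y. norm (Dc y) \<le> G"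
    and c_bound: "\<And>y. norm (c y) \<le> C"
    and gQ_grad: "\<And>r y. GDERIV (Qpen f c r) y :> gQ r y"
    and r: "r \<ge> 0"
  shows "norm (gQ r y - gQ r y') \<le> (Lf + r * (G^2 + C * Lc)) * norm (y - y')"
proof -
  define d where "d = gQ r y - gQ r y'"
  define n where "n = norm (y - y')"
  have n0: "n \<ge> 0" by (simp add: n_def)
  have G0: "G \<ge> 0" using Dc_bound[of y] norm_ge_zero order_trans by blast
  have C0: "C \<ge> 0" using c_bound[of y] norm_ge_zero order_trans by blast
  have i1: "gQ r y \<bullet> d = gf y \<bullet> d + r * (c y \<bullet> Dc y d)"
    by (rule gQ_inner[OF f_grad c_deriv gQ_grad])
  have i2: "gQ r y' \<bullet> d = gf y' \<bullet> d + r * (c y' \<bullet> Dc y' d)"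
    by (rule gQ_inner[OF f_grad c_deriv gQ_grad])
  have split: "c y \<bullet> Dc y d - c y' \<bullet> Dc y' d = (c y - c y') \<bullet> Dc y d + c y' \<bullet> (Dc y - Dc y') d"
    by (simp add: inner_diff_left inner_diff_right blinfun.diff_left)
  have b1: "\<bar>(c y - c y') \<bullet> Dc y d\<bar> \<le> (G * n) * (G * norm d)"
  proof -
    have "\<bar>(c y - c y') \<bullet> Dc y d\<bar> \<le> norm (c y - c y') * norm (Dc y d)" by (rule Cauchy_Schwarz_ineq2)
    also have "\<dots> \<le> (G * n) * (G * norm d)"
    proof (rule mult_mono)
      show "norm (c y - c y') \<le> G * n" unfolding n_def by (rule c_lip[OF c_deriv Dc_bound])
      show "norm (Dc y d) \<le> G * norm d"
        using norm_blinfun[of "Dc y" d] Dc_bound[of y] by (meson mult_right_mono norm_ge_zero order_trans)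
    qed (use G0 n0 in auto)
    finally show ?thesis .
  qed
  have b2: "\<bar>c y' \<bullet> (Dc y - Dc y') d\<bar> \<le> C * ((Lc * n) * norm d)"
  proof -
    have "\<bar>c y' \<bullet> (Dc y - Dc y') d\<bar> \<le> norm (c y') * norm ((Dc y - Dc y') d)" by (rule Cauchy_Schwarz_ineq2)
    also have "\<dots> \<le> C * ((Lc * n) * norm d)"
    proof (rule mult_mono)
      show "norm (c y') \<le> C" by (rule c_bound)
      show "norm ((Dc y - Dc y') d) \<le> (Lc * n) * norm d"
        using norm_blinfun[of "Dc y - Dc y'" d] c_smooth[of y y'] unfolding n_def
        by (meson mult_right_mono norm_ge_zero order_trans)
    qed (use C0 in auto)
    finally show ?thesis .
  qed
  have b3: "\<bar>(gf y - gf y') \<bullet> d\<bar> \<le> (Lf * n) * norm d"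
    using Cauchy_Schwarz_ineq2[of "gf y - gf y'" d] f_smooth[of y y'] unfolding n_def
    by (meson mult_right_mono norm_ge_zero order_trans)
  have "(norm d)^2 = d \<bullet> d" by (simp add: power2_norm_eq_inner)
  also have "\<dots> = (gf y - gf y') \<bullet> d + r * ((c y - c y') \<bullet> Dc y d + c y' \<bullet> (Dc y - Dc y') d)"
    using i1 i2 split unfolding d_def[symmetric]
    by (smt (verit, del_insts) d_def inner_diff_left right_diff_distrib)
  also have "\<dots> \<le> (Lf * n) * norm d + r * ((G * n) * (G * norm d) + C * ((Lc * n) * norm d))"
  proof -
    have "r * ((c y - c y') \<bullet> Dc y d + c y' \<bullet> (Dc y - Dc y') d) \<le> r * ((G * n) * (G * norm d) + C * ((Lc * n) * norm d))"
      using b1 b2 r by (intro mult_left_mono) auto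
    then show ?thesis using b3 by linarith
  qed
  also have "\<dots> = ((Lf + r * (G^2 + C * Lc)) * n) * norm d"
    by (simp add: algebra_simps power2_eq_square)
  finally have "norm d * norm d \<le> ((Lf + r * (G^2 + C * Lc)) * n) * norm d"
    by (simp add: power2_eq_square)
  then have "norm d \<le> (Lf + r * (G^2 + C * Lc)) * n"
  proof (cases "norm d = 0")
    case True
    show ?thesis
    proof (cases "y = y'")
      case False
      then have np: "n > 0" by (simp add: n_def)
      have "0 \<le> Lf * n" using f_smooth[of y y'] norm_ge_zero[of "gf y - gf y'"] unfolding n_def by linarith
      then have "Lf \<ge> 0" using np by (simp add: zero_le_mult_iff)
      moreover have "0 \<le> Lc * n" using c_smooth[of y y'] norm_ge_zero[of "Dc y - Dc y'"] unfolding n_def by linarith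
      then have "Lc \<ge> 0" using np by (simp add: zero_le_mult_iff)
      ultimately show ?thesis using True r C0 n0 by (simp)
    qed (simp add: True n_def)
  qed (use n0 in simp)
  then show ?thesis unfolding d_def n_def .
qed

theorem lemmaC3:
  fixes f :: "'a::euclidean_space \<Rightarrow> real"
    and gf :: "'a \<Rightarrow> 'a"
    and c :: "'a \<Rightarrow> 'b::euclidean_space"
    and Dc :: "'a \<Rightarrow> ('a \<Rightarrow>\<^sub>L 'b)"
    and h g :: "'a \<Rightarrow> ereal"
    and gQ :: "real \<Rightarrow> 'a \<Rightarrow> 'a"
    and x z Gest :: "nat \<Rightarrow> 'a"
    and \<mu> \<rho> :: "nat \<Rightarrow> real"
    and \<beta> \<rho>0 Lf Lc C G :: real
    and k :: nat
  assumes f_grad: "\<And>y. GDERIV f y :> gf y"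
    and f_smooth: "\<And>y y'. norm (gf y - gf y') \<le> Lf * norm (y - y')"
    and c_deriv: "\<And>y. (c has_derivative blinfun_apply (Dc y)) (at y)"
    and c_smooth: "\<And>y y'. norm (Dc y - Dc y') \<le> Lc * norm (y - y')"
    and CG_pos: "C > 0" "G > 0"
    and gf_bound: "\<And>y. norm (gf y) \<le> G"
    and h_sub_bound: "\<And>y s. s \<in> subdiff h y \<Longrightarrow> norm s \<le> G"
    and g_sub_bound: "\<And>y s. s \<in> subdiff g y \<Longrightarrow> norm s \<le> G"
    and Dc_bound: "\<And>y. norm (Dc y) \<le> G"
    and c_bound: "\<And>y. norm (c y) \<le> C"
    and h_pcc: "proper_fun h" "closed_fun h" "convex_fun h"
    and g_pcc: "proper_fun g" "closed_fun g" "convex_fun g"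
    and gQ_grad: "\<And>r y. GDERIV (Qpen f c r) y :> gQ r y"
    and rho0_pos: "\<rho>0 > 0"
    and rho_ge: "\<And>j. \<rho> j \<ge> \<rho>0"
    and mu_pos: "\<And>j. \<mu> j > 0"
    and beta_pos: "\<beta> > 0"
    and x_upd: "\<And>j. x (Suc j) = prox (\<mu> j) h (z j - \<mu> j *\<^sub>R Gest j)"
    and z_upd: "\<And>j. z (Suc j) = z j - \<beta> *\<^sub>R (prox (\<mu> j) g (z j) - x (Suc j))"
  shows "(let e = Gest k - gQ (\<rho> k) (x k);
              u = gQ (\<rho> k) (x (Suc k)) - Gest k
                  + inverse (\<mu> k) *\<^sub>R (prox (\<mu> k) g (z k) - x (Suc k));
              L = Lrho \<rho>0 Lf G C Lc (\<rho> k);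
              dw = (norm ((x (Suc k), z (Suc k)) - (x k, z k)))\<^sup>2
          in (norm u)\<^sup>2 \<le> 3 * (norm e)\<^sup>2 + 3 * (L\<^sup>2 + inverse ((\<mu> k * \<beta>)\<^sup>2)) * dw
           \<and> max ((norm u)\<^sup>2) ((norm (x (Suc k) - prox (\<mu> k) g (z k)))\<^sup>2)
               \<le> 3 * (norm e)\<^sup>2 + (3 * (L\<^sup>2 + inverse ((\<mu> k * \<beta>)\<^sup>2)) + inverse (\<beta>\<^sup>2)) * dw)"
proof -
  define e where "e = Gest k - gQ (\<rho> k) (x k)"
  define p where "p = prox (\<mu> k) g (z k)"
  define u where "u = gQ (\<rho> k) (x (Suc k)) - Gest k + inverse (\<mu> k) *\<^sub>R (p - x (Suc k))"
  define L where "L = Lrho \<rho>0 Lf G C Lc (\<rho> k)"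
  define xd where "xd = norm (x (Suc k) - x k)"
  define zd where "zd = norm (z (Suc k) - z k)"
  define m where "m = inverse (\<mu> k * \<beta>)"
  have dw: "(norm ((x (Suc k), z (Suc k)) - (x k, z k)))\<^sup>2 = xd^2 + zd^2"
    by (simp add: norm_Pair xd_def zd_def)
  obtain b :: 'a where b: "b \<in> Basis" using nonempty_Basis by blast
  have bn: "norm (0 - b) > 0" using b by auto
  have "0 \<le> Lf * norm (0 - b)" using f_smooth[of 0 b] norm_ge_zero[of "gf 0 - gf b"] by linarith
  then have Lf0: "Lf \<ge> 0" using bn by (simp add: zero_le_mult_iff)
  have "0 \<le> Lc * norm (0 - b)" using c_smooth[of 0 b] norm_ge_zero[of "Dc 0 - Dc b"] by linarith
  then have Lc0: "Lc \<ge> 0" using bn by (simp add: zero_le_mult_iff)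
  have rk: "\<rho> k > 0" using rho_ge[of k] rho0_pos by linarith
  have "Lf \<le> \<rho> k * (Lf / \<rho>0)"
  proof -
    have "Lf = \<rho>0 * (Lf / \<rho>0)" using rho0_pos by simp
    also have "\<dots> \<le> \<rho> k * (Lf / \<rho>0)" using rho_ge[of k] Lf0 rho0_pos by (intro mult_right_mono) auto
    finally show ?thesis .
  qed
  then have Lge: "Lf + \<rho> k * (G^2 + C * Lc) \<le> L"
    unfolding L_def Lrho_def by (simp add: algebra_simps)
  have L0: "L \<ge> 0" using Lge Lf0 Lc0 rk CG_pos by (smt (verit) mult_nonneg_nonneg zero_le_power2)
  have lip: "norm (gQ (\<rho> k) (x (Suc k)) - gQ (\<rho> k) (x k)) \<le> L * xd"
  proof -
    have "norm (gQ (\<rho> k) (x (Suc k)) - gQ (\<rho> k) (x k)) \<le> (Lf + \<rho> k * (G^2 + C * Lc)) * xd"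
      unfolding xd_def
      by (rule gQ_lip[OF f_grad f_smooth c_deriv c_smooth Dc_bound c_bound gQ_grad]) (use rk in simp)
    also have "\<dots> \<le> L * xd" using Lge by (intro mult_right_mono) (auto simp: xd_def)
    finally show ?thesis .
  qed
  have zdiff: "z (Suc k) - z k = - \<beta> *\<^sub>R (p - x (Suc k))" using z_upd[of k] by (simp add: p_def)
  have pz: "norm (p - x (Suc k)) = zd / \<beta>"
    using beta_pos by (simp add: zd_def zdiff)
  have mu0: "\<mu> k > 0" by (rule mu_pos)
  have pm: "norm (inverse (\<mu> k) *\<^sub>R (p - x (Suc k))) = m * zd"
  proof -
    have "norm (inverse (\<mu> k) *\<^sub>R (p - x (Suc k))) = inverse (\<mu> k) * (zd / \<beta>)"
      using mu0 by (simp add: pz)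
    then show ?thesis using mu0 beta_pos by (simp add: m_def field_simps)
  qed
  have ueq: "u = (gQ (\<rho> k) (x (Suc k)) - gQ (\<rho> k) (x k)) - e + inverse (\<mu> k) *\<^sub>R (p - x (Suc k))"
    by (simp add: u_def e_def)
  have nu: "norm u \<le> norm e + L * xd + m * zd"
    unfolding ueq using lip pm norm_triangle_ineq[of "(gQ (\<rho> k) (x (Suc k)) - gQ (\<rho> k) (x k)) - e" "inverse (\<mu> k) *\<^sub>R (p - x (Suc k))"]
      norm_triangle_ineq4[of "gQ (\<rho> k) (x (Suc k)) - gQ (\<rho> k) (x k)" e] by linarith
  have m0: "m \<ge> 0" using mu0 beta_pos by (simp add: m_def)
  have xd0: "xd \<ge> 0" and zd0: "zd \<ge> 0" by (auto simp: xd_def zd_def)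
  have "(norm u)^2 \<le> (norm e + L * xd + m * zd)^2"
    using nu by (intro power_mono) auto
  also have "\<dots> \<le> 3 * (norm e)^2 + 3 * ((L*xd)^2 + (m*zd)^2)"
    by (rule sq3)
  also have "\<dots> \<le> 3 * (norm e)^2 + 3 * (L^2 + m^2) * (xd^2 + zd^2)"
    using L0 m0 by (simp add: algebra_simps power_mult_distrib)
  finally have A: "(norm u)^2 \<le> 3 * (norm e)^2 + 3 * (L^2 + m^2) * (xd^2 + zd^2)" .
  have "(norm (x (Suc k) - p))^2 = inverse (\<beta>^2) * zd^2"
    using pz norm_minus_commute[of "x (Suc k)" p] by (simp add: power_divide field_simps)
  also have "\<dots> \<le> inverse (\<beta>^2) * (xd^2 + zd^2)" by (intro mult_left_mono) auto
  finally have B: "(norm (x (Suc k) - p))^2 \<le> inverse (\<beta>^2) * (xd^2 + zd^2)" .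
  have m2: "m^2 = inverse ((\<mu> k * \<beta>)\<^sup>2)" by (simp add: m_def power_inverse power_mult_distrib)
  have e3: "0 \<le> 3 * (norm e)^2" by simp
  have ib: "0 \<le> inverse (\<beta>^2) * (xd^2 + zd^2)" by simp
  have pp: "0 \<le> 3 * (L^2 + m^2) * (xd^2 + zd^2)" by simp
  have C1: "(norm u)^2 \<le> 3 * (norm e)^2 + 3 * (L^2 + m^2) * (xd^2 + zd^2)" by (rule A)
  have C2: "max ((norm u)^2) ((norm (x (Suc k) - p))^2) \<le> 3 * (norm e)^2 + (3 * (L^2 + m^2) + inverse (\<beta>^2)) * (xd^2 + zd^2)"
    unfolding max.bounded_iff distrib_right using A B e3 ib pp by (intro conjI; linarith)
  show ?thesis
    unfolding Let_def dw
    unfolding e_def[symmetric] p_def[symmetric] u_def[symmetric] L_def[symmetric] m2[symmetric]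
    using C1 C2 by blast
qed

end
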